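(* There exists a (continuous) homogeneous quadratic polynomial $P:\ell_1(\mathfrak{c})\to\mathbb{C}$, where $\mathfrak c$ is the cardinality of the continuum, which has a separable maximal zero subspace and also a maximal zero subspace of density $\mathfrak{c}$.
   Context: Banach spaces are complex. A zero subspace of $P$ is a linear subspace on which $P$ vanishes identically; it is maximal if not properly contained in another zero subspace. Density of a space means the least cardinality of a dense subset. *)

theory Defs
  imports "HOL-Analysis.Analysis" "HOL-Library.Equipollence"
begin

text \<open>The complex Banach space ell_1(c): index set = the reals (cardinality continuum),
  elements are functions real => complex with absolutely summable values.\<close>

definition l1 :: "(real \<Rightarrow> complex) set" where
  "l1 = {x. (\<lambda>i. norm (x i)) summable_on UNIV}"

definition l1norm :: "(real \<Rightarrow> complex) \<Rightarrow> real" where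
  "l1norm x = infsum (\<lambda>i. norm (x i)) UNIV"

definition l1_subspace :: "(real \<Rightarrow> complex) set \<Rightarrow> bool" where
  "l1_subspace V \<longleftrightarrow> V \<subseteq> l1 \<and> (\<lambda>i. 0) \<in> V \<and>
     (\<forall>x\<in>V. \<forall>y\<in>V. (\<lambda>i. x i + y i) \<in> V) \<and> (\<forall>c::complex. \<forall>x\<in>V. (\<lambda>i. c * x i) \<in> V)"

definition bounded_bilinear_l1 :: "((real \<Rightarrow> complex) \<Rightarrow> (real \<Rightarrow> complex) \<Rightarrow> complex) \<Rightarrow> bool" where
  "bounded_bilinear_l1 B \<longleftrightarrow>
     (\<forall>x\<in>l1. \<forall>y\<in>l1. \<forall>z\<in>l1. B (\<lambda>i. x i + y i) z = B x z + B y z \<and> B x (\<lambda>i. y i + z i) = B x y + B x z) \<and>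
     (\<forall>c::complex. \<forall>x\<in>l1. \<forall>y\<in>l1. B (\<lambda>i. c * x i) y = c * B x y \<and> B x (\<lambda>i. c * y i) = c * B x y) \<and>
     (\<exists>C. \<forall>x\<in>l1. \<forall>y\<in>l1. norm (B x y) \<le> C * l1norm x * l1norm y)"

text \<open>Continuous 2-homogeneous polynomial on ell_1 (values outside ell_1 irrelevant).\<close>
definition cont_quadratic_poly_l1 :: "((real \<Rightarrow> complex) \<Rightarrow> complex) \<Rightarrow> bool" where
  "cont_quadratic_poly_l1 P \<longleftrightarrow> (\<exists>B. bounded_bilinear_l1 B \<and> (\<forall>x\<in>l1. P x = B x x))"

definition zero_subspace :: "((real \<Rightarrow> complex) \<Rightarrow> complex) \<Rightarrow> (real \<Rightarrow> complex) set \<Rightarrow> bool" where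
  "zero_subspace P V \<longleftrightarrow> l1_subspace V \<and> (\<forall>x\<in>V. P x = 0)"

definition maximal_zero_subspace :: "((real \<Rightarrow> complex) \<Rightarrow> complex) \<Rightarrow> (real \<Rightarrow> complex) set \<Rightarrow> bool" where
  "maximal_zero_subspace P V \<longleftrightarrow> zero_subspace P V \<and>
     (\<forall>W. zero_subspace P W \<and> V \<subseteq> W \<longrightarrow> W = V)"

definition l1_dense_in :: "(real \<Rightarrow> complex) set \<Rightarrow> (real \<Rightarrow> complex) set \<Rightarrow> bool" where
  "l1_dense_in D V \<longleftrightarrow> D \<subseteq> V \<and> (\<forall>x\<in>V. \<forall>e>0. \<exists>d\<in>D. l1norm (\<lambda>i. x i - d i) < e)"

definition l1_separable :: "(real \<Rightarrow> complex) set \<Rightarrow> bool" where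
  "l1_separable V \<longleftrightarrow> (\<exists>D. countable D \<and> l1_dense_in D V)"

definition l1_density_continuum :: "(real \<Rightarrow> complex) set \<Rightarrow> bool" where
  "l1_density_continuum V \<longleftrightarrow>
     (\<exists>D. l1_dense_in D V \<and> D \<approx> (UNIV :: real set)) \<and>
     (\<forall>D. l1_dense_in D V \<longrightarrow> (UNIV :: real set) \<lesssim> D)"

end

theory Submission
  imports Defs
begin


lemma l1_abs_on: "x \<in> l1 \<Longrightarrow> (\<lambda>i. norm (x i)) summable_on A"
  unfolding l1_def by (auto intro: summable_on_subset_banach)

lemma l1_summ_on: "x \<in> l1 \<Longrightarrow> x summable_on A"
  by (rule abs_summable_summable) (rule l1_abs_on)

lemma l1norm_nonneg: "0 \<le> l1norm x"
  unfolding l1norm_def by (rule infsum_nonneg) auto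

lemma l1_add: "x \<in> l1 \<Longrightarrow> y \<in> l1 \<Longrightarrow> (\<lambda>i. x i + y i) \<in> l1"
  unfolding l1_def mem_Collect_eq
  by (rule summable_on_comparison_test[where f="\<lambda>i. norm (x i) + norm (y i)"])
     (auto intro: summable_on_add norm_triangle_ineq)

lemma l1_diff: "x \<in> l1 \<Longrightarrow> y \<in> l1 \<Longrightarrow> (\<lambda>i. x i - y i) \<in> l1"
  unfolding l1_def mem_Collect_eq
  by (rule summable_on_comparison_test[where f="\<lambda>i. norm (x i) + norm (y i)"])
     (auto intro: summable_on_add norm_triangle_ineq4)

lemma l1_scale: "x \<in> l1 \<Longrightarrow> (\<lambda>i. c * x i) \<in> l1"
  unfolding l1_def by (simp add: norm_mult summable_on_cmult_right)

lemma l1_zero: "(\<lambda>i. 0) \<in> l1"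
  unfolding l1_def by simp

lemma l1_finite: "finite {i. x i \<noteq> 0} \<Longrightarrow> x \<in> l1"
  unfolding l1_def mem_Collect_eq by (rule finite_nonzero_values_imp_summable_on) simp

definition e :: "real \<Rightarrow> real \<Rightarrow> complex" where "e a = (\<lambda>t. if t = a then 1 else 0)"

lemma e_l1: "e a \<in> l1"
  by (rule l1_finite) (auto simp: e_def)

lemma tail_small:
  assumes "x \<in> l1" "\<epsilon> > 0"
  shows "\<exists>F. finite F \<and> infsum (\<lambda>i. norm (x i)) (UNIV - F) < \<epsilon>"
proof -
  obtain F where F: "finite F" "dist (sum (\<lambda>i. norm (x i)) F) (infsum (\<lambda>i. norm (x i)) UNIV) \<le> \<epsilon>/2"
    using infsum_finite_approximation[OF l1_abs_on[OF assms(1)], of "\<epsilon>/2"] assms(2) by auto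
  have "infsum (\<lambda>i. norm (x i)) UNIV = infsum (\<lambda>i. norm (x i)) F + infsum (\<lambda>i. norm (x i)) (UNIV - F)"
    using infsum_Un_disjoint[of "\<lambda>i. norm (x i)" F "UNIV - F"] F(1) l1_abs_on[OF assms(1)]
    by (metis Diff_disjoint Un_Diff_cancel sup_top_right)
  with F show ?thesis using assms(2) by (intro exI[of _ F]) (auto simp: dist_real_def)
qed

lemma tail_mono:
  assumes "x \<in> l1" "S \<subseteq> T"
  shows "infsum (\<lambda>i. norm (x i)) S \<le> infsum (\<lambda>i. norm (x i)) T"
  using assms by (intro infsum_mono_neutral l1_abs_on) auto



definition Nset :: "real set" where "Nset = range real"
definition Cset :: "real set" where "Cset = range (\<lambda>m::nat. - real m - 1)"
definition Iv :: "nat \<Rightarrow> real set" where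
  "Iv k = {real_of_rat (fst (from_nat k :: rat \<times> rat)) <..< real_of_rat (snd (from_nat k :: rat \<times> rat))}"

definition coef :: "nat \<Rightarrow> real \<Rightarrow> complex" where
  "coef n t = (if t = - real n - 1 then 1 else if t \<in> Nset \<union> Cset then 0
               else if t \<in> Iv (fst (prod_decode n)) then 1 else 0)"

definition Lf :: "(real \<Rightarrow> complex) \<Rightarrow> real \<Rightarrow> complex" where
  "Lf y t = infsum (\<lambda>n. coef n t * y (real n)) UNIV"

definition Bf :: "(real \<Rightarrow> complex) \<Rightarrow> (real \<Rightarrow> complex) \<Rightarrow> complex" where
  "Bf x y = infsum (\<lambda>t. x t * Lf y t) UNIV"

definition Pf :: "(real \<Rightarrow> complex) \<Rightarrow> complex" where "Pf x = Bf x x"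

lemma coef_norm: "norm (coef n t) \<le> 1"
  by (simp add: coef_def)

lemma nat_part_abs: 
  assumes "y \<in> l1" 
  shows "(\<lambda>n. norm (y (real n))) summable_on UNIV"
    and "infsum (\<lambda>n. norm (y (real n))) UNIV \<le> l1norm y"
proof -
  have inj: "inj_on real (UNIV::nat set)" by (simp add: inj_on_def)
  have s: "(\<lambda>i. norm (y i)) summable_on (range real)" using l1_abs_on[OF assms] .
  then show "(\<lambda>n. norm (y (real n))) summable_on UNIV"
    using summable_on_reindex[OF inj, of "\<lambda>i. norm (y i)"] by (simp add: o_def)
  have "infsum (\<lambda>n. norm (y (real n))) UNIV = infsum (\<lambda>i. norm (y i)) (range real)"
    using infsum_reindex[OF inj, of "\<lambda>i. norm (y i)"] by (simp add: o_def)
  also have "\<dots> \<le> l1norm y" unfolding l1norm_def by (rule tail_mono[OF assms]) auto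
  finally show "infsum (\<lambda>n. norm (y (real n))) UNIV \<le> l1norm y" .
qed

lemma Lf_abs:
  assumes "y \<in> l1"
  shows "(\<lambda>n. norm (coef n t * y (real n))) summable_on UNIV"
  by (rule summable_on_comparison_test[OF nat_part_abs(1)[OF assms]])
     (auto simp: norm_mult intro!: mult_left_le_one_le coef_norm)

lemma Lf_summ: "y \<in> l1 \<Longrightarrow> (\<lambda>n. coef n t * y (real n)) summable_on UNIV"
  by (rule abs_summable_summable[OF Lf_abs])

lemma Lf_bound:
  assumes "y \<in> l1"
  shows "norm (Lf y t) \<le> l1norm y"
proof -
  have "norm (Lf y t) \<le> infsum (\<lambda>n. norm (coef n t * y (real n))) UNIV"
    unfolding Lf_def by (rule norm_infsum_bound[OF Lf_abs[OF assms]])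
  also have "\<dots> \<le> infsum (\<lambda>n. norm (y (real n))) UNIV"
    by (rule infsum_mono[OF Lf_abs[OF assms] nat_part_abs(1)[OF assms]])
       (auto simp: norm_mult intro!: mult_left_le_one_le coef_norm)
  also have "\<dots> \<le> l1norm y" by (rule nat_part_abs(2)[OF assms])
  finally show ?thesis .
qed

lemma Lf_add: "y \<in> l1 \<Longrightarrow> z \<in> l1 \<Longrightarrow> Lf (\<lambda>i. y i + z i) t = Lf y t + Lf z t"
  unfolding Lf_def by (simp add: distrib_left infsum_add Lf_summ)

lemma Lf_scale: assumes "y \<in> l1" shows "Lf (\<lambda>i. c * y i) t = c * Lf y t"
proof -
  have "Lf (\<lambda>i. c * y i) t = infsum (\<lambda>n. c * (coef n t * y (real n))) UNIV"
    unfolding Lf_def by (simp add: algebra_simps)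
  also have "\<dots> = c * Lf y t" unfolding Lf_def by (rule infsum_cmult_right) (rule Lf_summ[OF assms])
  finally show ?thesis .
qed

lemma Bf_abs:
  assumes "x \<in> l1" "y \<in> l1"
  shows "(\<lambda>t. norm (x t * Lf y t)) summable_on UNIV"
  by (rule summable_on_comparison_test[where f="\<lambda>t. norm (x t) * l1norm y"])
     (auto simp: norm_mult intro!: summable_on_cmult_left l1_abs_on assms mult_left_mono Lf_bound)

lemma Bf_summ: "x \<in> l1 \<Longrightarrow> y \<in> l1 \<Longrightarrow> (\<lambda>t. x t * Lf y t) summable_on UNIV"
  by (rule abs_summable_summable[OF Bf_abs])

lemma Bf_bound:
  assumes "x \<in> l1" "y \<in> l1"
  shows "norm (Bf x y) \<le> 1 * l1norm x * l1norm y"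
proof -
  have "norm (Bf x y) \<le> infsum (\<lambda>t. norm (x t * Lf y t)) UNIV"
    unfolding Bf_def by (rule norm_infsum_bound[OF Bf_abs[OF assms]])
  also have "\<dots> \<le> infsum (\<lambda>t. norm (x t) * l1norm y) UNIV"
    by (rule infsum_mono[OF Bf_abs[OF assms]])
       (auto simp: norm_mult intro!: summable_on_cmult_left l1_abs_on assms mult_left_mono Lf_bound)
  also have "\<dots> = l1norm x * l1norm y" unfolding l1norm_def
    by (rule infsum_cmult_left) (rule l1_abs_on[OF assms(1)])
  finally show ?thesis by simp
qed

lemma Bf_add_left: "x \<in> l1 \<Longrightarrow> y \<in> l1 \<Longrightarrow> z \<in> l1 \<Longrightarrow> Bf (\<lambda>i. x i + y i) z = Bf x z + Bf y z"
  unfolding Bf_def by (simp add: distrib_right infsum_add Bf_summ)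

lemma Bf_add_right: "x \<in> l1 \<Longrightarrow> y \<in> l1 \<Longrightarrow> z \<in> l1 \<Longrightarrow> Bf x (\<lambda>i. y i + z i) = Bf x y + Bf x z"
  unfolding Bf_def by (simp add: Lf_add distrib_left infsum_add Bf_summ)

lemma Bf_scale_left: "x \<in> l1 \<Longrightarrow> y \<in> l1 \<Longrightarrow> Bf (\<lambda>i. c * x i) y = c * Bf x y"
proof -
  assume a: "x \<in> l1" "y \<in> l1"
  have "Bf (\<lambda>i. c * x i) y = infsum (\<lambda>t. c * (x t * Lf y t)) UNIV"
    unfolding Bf_def by (simp add: algebra_simps)
  also have "\<dots> = c * Bf x y" unfolding Bf_def by (rule infsum_cmult_right) (rule Bf_summ[OF a])
  finally show ?thesis .
qed

lemma Bf_scale_right: "x \<in> l1 \<Longrightarrow> y \<in> l1 \<Longrightarrow> Bf x (\<lambda>i. c * y i) = c * Bf x y"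
proof -
  assume a: "x \<in> l1" "y \<in> l1"
  have "Bf x (\<lambda>i. c * y i) = infsum (\<lambda>t. c * (x t * Lf y t)) UNIV"
    unfolding Bf_def by (simp add: Lf_scale[OF a(2)] algebra_simps)
  also have "\<dots> = c * Bf x y" unfolding Bf_def by (rule infsum_cmult_right) (rule Bf_summ[OF a])
  finally show ?thesis .
qed

lemma Bf_bilinear: "bounded_bilinear_l1 Bf"
  unfolding bounded_bilinear_l1_def
  using Bf_add_left Bf_add_right Bf_scale_left Bf_scale_right Bf_bound by blast

lemma Pf_quad: "cont_quadratic_poly_l1 Pf"
  unfolding cont_quadratic_poly_l1_def Pf_def using Bf_bilinear by blast

lemma Pf_add:
  assumes "x \<in> l1" "y \<in> l1"
  shows "Pf (\<lambda>i. x i + y i) = Pf x + Bf x y + Bf y x + Pf y"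
  unfolding Pf_def using assms
  by (simp add: Bf_add_left Bf_add_right l1_add)



lemma infsum_fin_supp:
  assumes "finite S" "S \<subseteq> A" "\<And>x. x \<in> A - S \<Longrightarrow> f x = 0"
  shows "infsum f A = sum f S"
proof -
  have "infsum f A = infsum f S"
    by (rule infsum_cong_neutral) (use assms in auto)
  then show ?thesis using assms(1) by simp
qed

lemma infsum_single: "infsum (\<lambda>n. if n = m then c else 0) UNIV = c"
  by (subst infsum_fin_supp[of "{m}"]) auto

lemma coef_Nset: "t \<in> Nset \<Longrightarrow> coef n t = 0"
  unfolding coef_def Nset_def by auto

lemma coef_C: "coef n (- real m - 1) = (if n = m then 1 else 0)"
  unfolding coef_def Cset_def by auto

lemma Lf_Nset: "t \<in> Nset \<Longrightarrow> Lf y t = 0"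
  unfolding Lf_def by (simp add: coef_Nset)

lemma Lf_C: "Lf y (- real m - 1) = y (real m)"
proof -
  have "(\<lambda>n. coef n (- real m - 1) * y (real n)) = (\<lambda>n. if n = m then y (real m) else 0)"
    by (auto simp: coef_C)
  then show ?thesis unfolding Lf_def by (simp add: infsum_single)
qed

lemma Lf_e: "Lf (e (real m)) t = coef m t"
proof -
  have "(\<lambda>n. coef n t * e (real m) (real n)) = (\<lambda>n. if n = m then coef m t else 0)"
    by (auto simp: e_def)
  then show ?thesis unfolding Lf_def by (simp add: infsum_single)
qed

lemma Bf_e_left: "Bf (e a) y = Lf y a"
proof -
  have "(\<lambda>t. e a t * Lf y t) = (\<lambda>t. if t = a then Lf y a else 0)"
    by (auto simp: e_def)
  then show ?thesis unfolding Bf_def by (simp add: infsum_single)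
qed

lemma Lf_zeroN: "(\<And>n. y (real n) = 0) \<Longrightarrow> Lf y t = 0"
  unfolding Lf_def by simp

definition VV :: "(real \<Rightarrow> complex) set" where "VV = {x \<in> l1. \<forall>t. t \<notin> Nset \<longrightarrow> x t = 0}"
definition WW :: "(real \<Rightarrow> complex) set" where "WW = {x \<in> l1. \<forall>n. x (real n) = 0}"

lemma VV_sub: "l1_subspace VV"
  unfolding l1_subspace_def VV_def by (auto intro: l1_add l1_scale l1_zero)

lemma WW_sub: "l1_subspace WW"
  unfolding l1_subspace_def WW_def by (auto intro: l1_add l1_scale l1_zero)

lemma VV_zero: "zero_subspace Pf VV"
proof -
  have "Pf x = 0" if "x \<in> VV" for x
  proof -
    have "\<And>t. x t * Lf x t = 0" using that by (auto simp: VV_def Lf_Nset) (metis Lf_Nset)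
    then have "(\<lambda>t. x t * Lf x t) = (\<lambda>t. 0)" by (intro ext) auto
    then show ?thesis unfolding Pf_def Bf_def by simp
  qed
  then show ?thesis unfolding zero_subspace_def using VV_sub by blast
qed

lemma WW_zero: "zero_subspace Pf WW"
proof -
  have "Pf x = 0" if "x \<in> WW" for x
    using that unfolding Pf_def Bf_def WW_def by (simp add: Lf_zeroN)
  then show ?thesis unfolding zero_subspace_def using WW_sub by blast
qed

lemma cross_zero:
  assumes "zero_subspace Pf U" "y \<in> U" "z \<in> U"
  shows "Bf y z + Bf z y = 0"
proof -
  have l: "y \<in> l1" "z \<in> l1" using assms unfolding zero_subspace_def l1_subspace_def by auto
  have "(\<lambda>i. y i + z i) \<in> U" using assms unfolding zero_subspace_def l1_subspace_def by auto
  then have "Pf (\<lambda>i. y i + z i) = 0" "Pf y = 0" "Pf z = 0"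
    using assms unfolding zero_subspace_def by auto
  with Pf_add[OF l] show ?thesis by (simp add: add.assoc)
qed

lemma WW_max: "maximal_zero_subspace Pf WW"
  unfolding maximal_zero_subspace_def
proof (intro conjI WW_zero allI impI)
  fix U assume U: "zero_subspace Pf U \<and> WW \<subseteq> U"
  have "U \<subseteq> WW"
  proof
    fix y assume y: "y \<in> U"
    have yl: "y \<in> l1" using U y unfolding zero_subspace_def l1_subspace_def by auto
    have "y (real m) = 0" for m
    proof -
      have eW: "e (- real m - 1) \<in> WW"
        unfolding WW_def using e_l1 by (auto simp: e_def)
      then have "e (- real m - 1) \<in> U" using U by auto
      from cross_zero[OF conjunct1[OF U] y this] have "Bf y (e (- real m - 1)) + Bf (e (- real m - 1)) y = 0" .
      moreover have "Bf y (e (- real m - 1)) = 0"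
        unfolding Bf_def using eW by (simp add: Lf_zeroN WW_def)
      ultimately show ?thesis by (simp add: Bf_e_left Lf_C)
    qed
    then show "y \<in> WW" using yl by (simp add: WW_def)
  qed
  then show "U = WW" using U by auto
qed



lemma separation:
  assumes y: "y \<in> l1" and t0: "t0 \<in> R"
    and H: "\<And>a b::rat. infsum y (R \<inter> {real_of_rat a<..<real_of_rat b}) = 0"
  shows "y t0 = 0"
proof (rule ccontr)
  assume ne: "y t0 \<noteq> 0"
  define \<epsilon> where "\<epsilon> = norm (y t0) / 2"
  have ep: "\<epsilon> > 0" using ne by (simp add: \<epsilon>_def)
  obtain F where F: "finite F" "infsum (\<lambda>i. norm (y i)) (UNIV - F) < \<epsilon>"
    using tail_small[OF y ep] by blast
  define \<delta> where "\<delta> = Min (insert 1 ((\<lambda>t. \<bar>t - t0\<bar>) ` (F - {t0})))"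
  have fin: "finite (insert 1 ((\<lambda>t. \<bar>t - t0\<bar>) ` (F - {t0})))" using F(1) by simp
  have dpos: "\<delta> > 0" unfolding \<delta>_def using fin by (auto simp: Min_gr_iff)
  have dle: "\<delta> \<le> \<bar>t - t0\<bar>" if "t \<in> F - {t0}" for t
    unfolding \<delta>_def using fin that by (intro Min_le) auto
  obtain r1 where r1: "r1 \<in> \<rat>" "t0 - \<delta> < r1" "r1 < t0" using Rats_dense_in_real[of "t0 - \<delta>" t0] dpos by auto
  obtain r2 where r2: "r2 \<in> \<rat>" "t0 < r2" "r2 < t0 + \<delta>" using Rats_dense_in_real[of t0 "t0 + \<delta>"] dpos by auto
  obtain a where a: "r1 = real_of_rat a" using r1(1) Rats_cases by blast
  obtain b where b: "r2 = real_of_rat b" using r2(1) Rats_cases by blast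
  define S where "S = R \<inter> {real_of_rat a<..<real_of_rat b}"
  have t0S: "t0 \<in> S" using t0 r1 r2 a b by (auto simp: S_def)
  have sub: "S - {t0} \<subseteq> UNIV - F"
  proof
    fix t assume t: "t \<in> S - {t0}"
    have "t \<notin> F"
    proof
      assume "t \<in> F"
      then have "\<delta> \<le> \<bar>t - t0\<bar>" using t dle by auto
      moreover have "\<bar>t - t0\<bar> < \<delta>" using t r1 r2 a b by (auto simp: S_def)
      ultimately show False by simp
    qed
    then show "t \<in> UNIV - F" by simp
  qed
  have "infsum y S = infsum y (insert t0 (S - {t0}))" using t0S by (simp add: insert_absorb)
  also have "\<dots> = y t0 + infsum y (S - {t0})"
    by (rule infsum_insert) (auto intro: l1_summ_on[OF y])
  finally have eq: "y t0 = - infsum y (S - {t0})" using H[of a b] by (simp add: S_def eq_neg_iff_add_eq_0)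
  have "norm (infsum y (S - {t0})) \<le> infsum (\<lambda>i. norm (y i)) (S - {t0})"
    by (rule norm_infsum_bound) (rule l1_abs_on[OF y])
  also have "\<dots> \<le> infsum (\<lambda>i. norm (y i)) (UNIV - F)" by (rule tail_mono[OF y sub])
  finally have "norm (y t0) < \<epsilon>" using eq F(2) by simp
  then show False using ne by (simp add: \<epsilon>_def)
qed

lemma Iv_surj: "Iv (to_nat (a, b)) = {real_of_rat a<..<real_of_rat b}"
  unfolding Iv_def by simp

lemma seq_C_zero:
  assumes "y \<in> l1"
  shows "(\<lambda>m. y (- real m - 1)) \<longlonglongrightarrow> 0"
proof -
  have inj: "inj_on (\<lambda>m::nat. - real m - 1) UNIV" by (auto simp: inj_on_def)
  have "(\<lambda>i. norm (y i)) summable_on range (\<lambda>m::nat. - real m - 1)" by (rule l1_abs_on[OF assms])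
  then have "(\<lambda>m. norm (y (- real m - 1))) summable_on UNIV"
    using summable_on_reindex[OF inj, of "\<lambda>i. norm (y i)"] by (simp add: o_def)
  then have "summable (\<lambda>m. norm (y (- real m - 1)))" by (rule summable_on_imp_summable)
  then have "(\<lambda>m. norm (y (- real m - 1))) \<longlonglongrightarrow> 0" by (rule summable_LIMSEQ_zero)
  then show ?thesis by (simp add: tendsto_norm_zero_iff)
qed

lemma prod_encode_at_top: "filterlim (\<lambda>j. prod_encode (k, j)) at_top sequentially"
proof -
  have "j \<le> prod_encode (k, j)" for j
    by (rule le_prod_encode_2)
  then show ?thesis
    by (auto simp: filterlim_at_top eventually_sequentially intro: le_trans)
qed



definition Rr :: "real set" where "Rr = UNIV - Nset - Cset"

lemma Bf_e_right:
  assumes y: "y \<in> l1"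
  shows "Bf y (e (real m)) = y (- real m - 1) + infsum y (Rr \<inter> Iv (fst (prod_decode m)))"
proof -
  let ?c = "- real m - 1" and ?T = "Rr \<inter> Iv (fst (prod_decode m))"
  have cC: "?c \<in> Cset" unfolding Cset_def by auto
  have "Bf y (e (real m)) = infsum (\<lambda>t. y t * coef m t) UNIV" unfolding Bf_def by (simp add: Lf_e)
  also have "\<dots> = infsum y (insert ?c ?T)"
  proof (rule infsum_cong_neutral)
    fix x assume "x \<in> UNIV - insert ?c ?T"
    then show "y x * coef m x = 0" by (auto simp: coef_def Rr_def)
  next
    fix x assume "x \<in> UNIV \<inter> insert ?c ?T"
    then show "y x * coef m x = y x" using cC by (auto simp: coef_def Rr_def)
  qed simp
  also have "\<dots> = y ?c + infsum y ?T"
    by (rule infsum_insert) (use cC l1_summ_on[OF y] in \<open>auto simp: Rr_def\<close>)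
  finally show ?thesis .
qed

lemma VV_max: "maximal_zero_subspace Pf VV"
  unfolding maximal_zero_subspace_def
proof (intro conjI VV_zero allI impI)
  fix U assume U: "zero_subspace Pf U \<and> VV \<subseteq> U"
  have "U \<subseteq> VV"
  proof
    fix y assume y: "y \<in> U"
    have yl: "y \<in> l1" using U y unfolding zero_subspace_def l1_subspace_def by auto
    define s where "s k = infsum y (Rr \<inter> Iv k)" for k
    have key: "y (- real m - 1) + s (fst (prod_decode m)) = 0" for m
    proof -
      have eV: "e (real m) \<in> VV"
        unfolding VV_def Nset_def using e_l1 by (auto simp: e_def)
      then have "e (real m) \<in> U" using U by auto
      from cross_zero[OF conjunct1[OF U] y this] have "Bf y (e (real m)) + Bf (e (real m)) y = 0" .
      moreover have "Bf (e (real m)) y = 0" by (simp add: Bf_e_left Lf_Nset Nset_def)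
      ultimately show ?thesis by (simp add: Bf_e_right[OF yl] s_def)
    qed
    have s0: "s k = 0" for k
    proof -
      have "(\<lambda>j. y (- real (prod_encode (k, j)) - 1)) \<longlonglongrightarrow> 0"
        using filterlim_compose[OF seq_C_zero[OF yl] prod_encode_at_top[of k]] by simp
      moreover have "y (- real (prod_encode (k, j)) - 1) = - s k" for j
        using key[of "prod_encode (k, j)"] by (simp add: eq_neg_iff_add_eq_0)
      ultimately have "(\<lambda>j. - s k) \<longlonglongrightarrow> 0" by simp
      then show ?thesis by (simp add: LIMSEQ_const_iff)
    qed
    have yR: "y t = 0" if "t \<in> Rr" for t
    proof (rule separation[OF yl that])
      fix a b :: rat
      show "infsum y (Rr \<inter> {real_of_rat a<..<real_of_rat b}) = 0"
        using s0[of "to_nat (a, b)"] by (simp add: s_def Iv_surj)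
    qed
    have yC: "y (- real m - 1) = 0" for m using key[of m] s0 by simp
    have "y t = 0" if "t \<notin> Nset" for t
    proof (cases "t \<in> Cset")
      case True then show ?thesis using yC by (auto simp: Cset_def)
    next
      case False then show ?thesis using yR that by (auto simp: Rr_def)
    qed
    then show "y \<in> VV" using yl by (simp add: VV_def)
  qed
  then show "U = VV" using U by auto
qed



definition cq :: "rat \<times> rat \<Rightarrow> complex" where
  "cq p = Complex (real_of_rat (fst p)) (real_of_rat (snd p))"

definition dV :: "(rat \<times> rat) list \<Rightarrow> real \<Rightarrow> complex" where
  "dV l t = (if t \<in> real ` {..<length l} then cq (l ! nat \<lfloor>t\<rfloor>) else 0)"

lemma rat_approx:
  assumes "\<delta> > 0" shows "\<exists>p. norm (z - cq p) < \<delta>"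
proof -
  obtain r1 where r1: "r1 \<in> \<rat>" "Re z - \<delta>/2 < r1" "r1 < Re z" using Rats_dense_in_real[of "Re z - \<delta>/2" "Re z"] assms by auto
  obtain r2 where r2: "r2 \<in> \<rat>" "Im z - \<delta>/2 < r2" "r2 < Im z" using Rats_dense_in_real[of "Im z - \<delta>/2" "Im z"] assms by auto
  obtain a where a: "r1 = real_of_rat a" using r1(1) Rats_cases by blast
  obtain b where b: "r2 = real_of_rat b" using r2(1) Rats_cases by blast
  have "norm (z - cq (a, b)) \<le> \<bar>Re (z - cq (a, b))\<bar> + \<bar>Im (z - cq (a, b))\<bar>" by (rule cmod_le)
  also have "\<dots> < \<delta>" using r1 r2 a b by (simp add: cq_def)
  finally show ?thesis by blast
qed

lemma dV_l1: "dV l \<in> l1"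
proof (rule l1_finite)
  show "finite {i. dV l i \<noteq> 0}"
    by (rule finite_subset[of _ "real ` {..<length l}"]) (auto simp: dV_def split: if_splits)
qed

lemma dV_VV: "dV l \<in> VV"
  using dV_l1 by (auto simp: VV_def dV_def Nset_def)

lemma VV_sep: "l1_separable VV"
  unfolding l1_separable_def
proof (intro exI conjI)
  show "countable (range dV)" by simp
  show "l1_dense_in (range dV) VV"
    unfolding l1_dense_in_def
  proof (intro conjI ballI allI impI)
    show "range dV \<subseteq> VV" using dV_VV by auto
    fix x \<epsilon> assume x: "x \<in> VV" and ep: "(\<epsilon>::real) > 0"
    have xl: "x \<in> l1" using x by (simp add: VV_def)
    obtain F where F: "finite F" "infsum (\<lambda>i. norm (x i)) (UNIV - F) < \<epsilon>/2"
      using tail_small[OF xl, of "\<epsilon>/2"] ep by auto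
    have "finite (real -` F)" by (rule finite_vimageI[OF F(1)]) (auto simp: inj_on_def)
    then obtain M where M: "\<And>n. real n \<in> F \<Longrightarrow> n < M"
      using finite_nat_set_iff_bounded by (metis vimage_eq)
    define \<delta> where "\<delta> = \<epsilon> / (2 * (real M + 1))"
    have dp: "\<delta> > 0" using ep by (simp add: \<delta>_def)
    have "\<forall>n. \<exists>p. norm (x (real n) - cq p) < \<delta>" using rat_approx[OF dp] by blast
    then obtain q where q: "\<And>n. norm (x (real n) - cq (q n)) < \<delta>"
      by metis
    define l where "l = map q [0..<M]"
    define d where "d = dV l"
    have dl: "d \<in> l1" using dV_l1 by (simp add: d_def)
    define G where "G = real ` {..<M}"
    have dG: "d (real n) = cq (q n)" if "n < M" for n
      using that by (auto simp: d_def dV_def l_def)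
    have dnG: "d t = 0" if "t \<notin> G" for t
      using that by (auto simp: d_def dV_def l_def G_def)
    have sm: "(\<lambda>i. norm (x i - d i)) summable_on A" for A
      using l1_abs_on[OF l1_diff[OF xl dl]] .
    have "l1norm (\<lambda>i. x i - d i) = infsum (\<lambda>i. norm (x i - d i)) (G \<union> (UNIV - G))"
      unfolding l1norm_def by simp
    also have "\<dots> = infsum (\<lambda>i. norm (x i - d i)) G + infsum (\<lambda>i. norm (x i - d i)) (UNIV - G)"
      by (rule infsum_Un_disjoint[OF sm sm]) auto
    also have "infsum (\<lambda>i. norm (x i - d i)) G = (\<Sum>n<M. norm (x (real n) - d (real n)))"
      unfolding G_def by (simp add: sum.reindex inj_on_def)
    also have "\<dots> \<le> (\<Sum>n<M. \<delta>)"
      by (rule sum_mono) (use q dG in \<open>auto intro: less_imp_le\<close>)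
    also have "\<dots> \<le> \<epsilon>/2"
    proof -
      have "real M * \<epsilon> \<le> (real M + 1) * \<epsilon>" using ep by simp
      then show ?thesis using ep by (simp add: \<delta>_def field_simps)
    qed
    also have "infsum (\<lambda>i. norm (x i - d i)) (UNIV - G) \<le> infsum (\<lambda>i. norm (x i)) (UNIV - F)"
    proof (rule infsum_mono_neutral[OF sm l1_abs_on[OF xl]])
      fix t assume "t \<in> (UNIV - G) \<inter> (UNIV - F)"
      then show "norm (x t - d t) \<le> norm (x t)" using dnG by simp
    next
      fix t assume t: "t \<in> (UNIV - G) - (UNIV - F)"
      have "x t = 0"
      proof (cases "t \<in> Nset")
        case True
        then obtain n where n: "t = real n" by (auto simp: Nset_def)
        then have "n < M" using M t by auto
        then show ?thesis using t n by (auto simp: G_def)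
      next
        case False then show ?thesis using x by (auto simp: VV_def)
      qed
      then show "norm (x t - d t) \<le> 0" using dnG t by simp
    qed simp
    finally show "\<exists>d\<in>range dV. l1norm (\<lambda>i. x i - d i) < \<epsilon>"
      using F(2) d_def by (intro bexI[of _ d]) auto
  qed
qed



lemma l1norm_tri:
  assumes "x \<in> l1" "y \<in> l1" "z \<in> l1"
  shows "l1norm (\<lambda>i. x i - z i) \<le> l1norm (\<lambda>i. x i - y i) + l1norm (\<lambda>i. y i - z i)"
proof -
  have "l1norm (\<lambda>i. x i - z i) \<le> infsum (\<lambda>i. norm (x i - y i) + norm (y i - z i)) UNIV"
    unfolding l1norm_def
    by (rule infsum_mono)
       (use l1_abs_on[OF l1_diff[OF assms(1,3)]] l1_abs_on[OF l1_diff[OF assms(1,2)]]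
            l1_abs_on[OF l1_diff[OF assms(2,3)]] in
        \<open>auto intro: summable_on_add norm_diff_triangle_le\<close>)
  also have "\<dots> = l1norm (\<lambda>i. x i - y i) + l1norm (\<lambda>i. y i - z i)"
    unfolding l1norm_def
    by (rule infsum_add) (use l1_abs_on[OF l1_diff[OF assms(1,2)]] l1_abs_on[OF l1_diff[OF assms(2,3)]] in auto)
  finally show ?thesis .
qed

lemma l1norm_e_diff:
  assumes "a \<noteq> b" shows "l1norm (\<lambda>i. e a i - e b i) = 2"
proof -
  have "l1norm (\<lambda>i. e a i - e b i) = (\<Sum>i\<in>{a,b}. norm (e a i - e b i))"
    unfolding l1norm_def by (rule infsum_fin_supp) (auto simp: e_def)
  also have "\<dots> = 2" using assms by (simp add: e_def)
  finally show ?thesis .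
qed

lemma WW_lower:
  assumes D: "l1_dense_in D WW"
  shows "(UNIV :: real set) \<lesssim> D"
proof -
  have DW: "D \<subseteq> WW" using D by (simp add: l1_dense_in_def)
  have eW: "e (- exp t) \<in> WW" for t
  proof -
    have ne: "real n \<noteq> - exp t" for n
      by (metis exp_gt_zero neg_less_0_iff_less of_nat_0_le_iff not_le)
    have "e (- exp t) (real n) = 0" for n using ne[of n] by (simp add: e_def)
    then show ?thesis using e_l1 unfolding WW_def by blast
  qed
  have "\<forall>t. \<exists>d\<in>D. l1norm (\<lambda>i. e (- exp t) i - d i) < 1"
    using D eW unfolding l1_dense_in_def by auto
  then obtain g where g: "\<And>t. g t \<in> D" "\<And>t. l1norm (\<lambda>i. e (- exp t) i - g t i) < 1"
    by metis
  have gl: "g t \<in> l1" for t using g(1) DW by (auto simp: WW_def)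
  have "inj_on g UNIV"
  proof (rule inj_onI)
    fix s t assume st: "g s = g t"
    show "s = t"
    proof (rule ccontr)
      assume "s \<noteq> t"
      then have ne: "- exp s \<noteq> - exp t" by simp
      have "l1norm (\<lambda>i. e (- exp s) i - e (- exp t) i)
          \<le> l1norm (\<lambda>i. e (- exp s) i - g s i) + l1norm (\<lambda>i. g s i - e (- exp t) i)"
        by (rule l1norm_tri[OF e_l1 gl e_l1])
      also have "l1norm (\<lambda>i. g s i - e (- exp t) i) = l1norm (\<lambda>i. e (- exp t) i - g t i)"
        unfolding l1norm_def st by (simp add: norm_minus_commute)
      finally have "2 < (2::real)" using g(2)[of s] g(2)[of t] l1norm_e_diff[OF ne] by linarith
      then show False by simp
    qed
  qed
  then show ?thesis unfolding lepoll_def using g(1) by auto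
qed

definition dW :: "(real \<times> complex) list \<Rightarrow> real \<Rightarrow> complex" where
  "dW l t = (if t \<in> Nset then 0 else (case map_of l t of None \<Rightarrow> 0 | Some z \<Rightarrow> z))"

lemma dW_WW: "dW l \<in> WW"
proof -
  have "finite {i. dW l i \<noteq> 0}"
    by (rule finite_subset[of _ "dom (map_of l)"]) (auto simp: dW_def finite_dom_map_of split: option.splits)
  then show ?thesis using l1_finite by (auto simp: WW_def dW_def Nset_def)
qed

lemma dW_dense: "l1_dense_in (range dW) WW"
  unfolding l1_dense_in_def
proof (intro conjI ballI allI impI)
  show "range dW \<subseteq> WW" using dW_WW by auto
  fix x \<epsilon> assume x: "x \<in> WW" and ep: "(\<epsilon>::real) > 0"
  have xl: "x \<in> l1" using x by (simp add: WW_def)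
  obtain F where F: "finite F" "infsum (\<lambda>i. norm (x i)) (UNIV - F) < \<epsilon>"
    using tail_small[OF xl ep] by auto
  define l where "l = map (\<lambda>t. (t, x t)) (sorted_list_of_set F)"
  have ml: "map_of l t = (if t \<in> F then Some (x t) else None)" for t
    using F(1) by (simp add: l_def map_of_map_restrict restrict_map_def)
  have xN: "t \<in> Nset \<Longrightarrow> x t = 0" for t using x by (auto simp: WW_def Nset_def)
  have "l1norm (\<lambda>i. x i - dW l i) = infsum (\<lambda>i. norm (x i)) (UNIV - F)"
    unfolding l1norm_def
    by (rule infsum_cong_neutral) (auto simp: dW_def ml xN)
  with F(2) show "\<exists>d\<in>range dW. l1norm (\<lambda>i. x i - d i) < \<epsilon>" by (intro bexI[of _ "dW l"]) auto
qed

fun declist :: "(real \<Rightarrow> real \<times> real) \<Rightarrow> (real \<Rightarrow> 'a) \<Rightarrow> nat \<Rightarrow> real \<Rightarrow> 'a list" where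
  "declist \<sigma> p 0 r = []"
| "declist \<sigma> p (Suc n) r = p (fst (\<sigma> r)) # declist \<sigma> p n (snd (\<sigma> r))"

lemma declist_surj:
  assumes "surj \<sigma>" "surj p"
  shows "\<exists>r. declist \<sigma> p (length l) r = l"
proof (induction l)
  case Nil then show ?case by simp
next
  case (Cons a l)
  then obtain r where r: "declist \<sigma> p (length l) r = l" by blast
  obtain s where s: "p s = a" using assms(2) by (metis surjD)
  obtain u where u: "\<sigma> u = (s, r)" using assms(1) by (metis surjD)
  show ?case using r s u by (intro exI[of _ u]) simp
qed

lemma real_sq_surj: "\<exists>\<sigma>::real \<Rightarrow> real \<times> real. surj \<sigma>"
proof -
  have inf: "infinite (UNIV :: real set)" by (simp add: infinite_UNIV_char_0)
  have "(UNIV :: (real \<times> real) set) \<approx> (UNIV :: real set)"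
    using card_of_Times_same_infinite[OF inf] by (simp add: eqpoll_iff_card_of_ordIso)
  then have "(UNIV :: real set) \<approx> (UNIV :: (real \<times> real) set)" by (rule eqpoll_sym)
  then obtain h where "bij_betw h (UNIV :: real set) (UNIV :: (real \<times> real) set)"
    unfolding eqpoll_def by blast
  then show ?thesis by (auto simp: bij_betw_def)
qed

lemma WW_dens: "l1_density_continuum WW"
  unfolding l1_density_continuum_def
proof (intro conjI allI impI exI)
  show "l1_dense_in (range dW) WW" by (rule dW_dense)
  obtain \<sigma> :: "real \<Rightarrow> real \<times> real" where \<sigma>: "surj \<sigma>" using real_sq_surj by blast
  define p where "p r = (fst (\<sigma> r), Complex (fst (\<sigma> (snd (\<sigma> r)))) (snd (\<sigma> (snd (\<sigma> r)))))" for r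
  have ps: "surj p"
  proof -
    have "(a, z) \<in> range p" for a z
    proof -
      obtain u where u: "\<sigma> u = (Re z, Im z)" using \<sigma> by (metis surjD)
      obtain v where v: "\<sigma> v = (a, u)" using \<sigma> by (metis surjD)
      show ?thesis using u v by (intro image_eqI[of _ _ v]) (auto simp: p_def complex_eq_iff)
    qed
    then show ?thesis by auto
  qed
  define dec where "dec r = declist \<sigma> p (nat \<lfloor>fst (\<sigma> r)\<rfloor>) (snd (\<sigma> r))" for r
  have "surj dec"
  proof -
    have "l \<in> range dec" for l
    proof -
      obtain r0 where r0: "declist \<sigma> p (length l) r0 = l" using declist_surj[OF \<sigma> ps] by blast
      obtain u where u: "\<sigma> u = (real (length l), r0)" using \<sigma> by (metis surjD)
      show ?thesis using u r0 by (intro image_eqI[of _ _ u]) (auto simp: dec_def)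
    qed
    then show ?thesis by auto
  qed
  then have "range dW \<subseteq> (dW \<circ> dec) ` UNIV" by (metis image_comp order_refl)
  then have "range dW \<lesssim> (UNIV :: real set)" by (rule subset_image_lepoll)
  moreover have "(UNIV :: real set) \<lesssim> range dW" by (rule WW_lower[OF dW_dense])
  ultimately show "range dW \<approx> (UNIV :: real set)" by (rule lepoll_antisym)
next
  fix D assume "l1_dense_in D WW"
  then show "(UNIV :: real set) \<lesssim> D" by (rule WW_lower)
qed


theorem mainTheorem3:
  shows "\<exists>P. cont_quadratic_poly_l1 P \<and>
     (\<exists>V. maximal_zero_subspace P V \<and> l1_separable V) \<and>
     (\<exists>W. maximal_zero_subspace P W \<and> l1_density_continuum W)"
  using Pf_quad VV_max VV_sep WW_max WW_dens by blast

end
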